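(* Let $a>0$, $\mu=p/q\in(0,1)$ with $p,q$ coprime, and consider $u_t+au_x=0$ on the periodic domain $[0,1)$ with 1-periodic initial function $u_0\in C^0([0,1])$. For each $m\in\mathbb{N}$ with $N=\frac{1}{\mu h}\in\mathbb{N}$, $h=1/m$, choose $\delta=\delta(h)$ with $0<\delta<h/q$, and initialize the nonlinear jet scheme by $$\phi_j^0=\hat\phi_j+\frac{\hat\phi_{j+1}-\hat\phi_j}{h}\,\delta,\qquad \psi_j^0=\frac{\hat\phi_{j+1}-\hat\phi_j}{h},\qquad \hat\phi_j=u_0(x_j),$$ (indices mod $m$), i.e. $\phi_j^0=I(x_j+\delta)$, $\psi_j^0=I'(x_j+\delta)$ where $I$ is the continuous periodic piecewise linear interpolant of the data $(x_j,\hat\phi_j)$. Let $\boldsymbol U^{h,t_n}$ be the state after $n$ jet scheme steps ($t_n=n\Delta t$, $\Delta t=\mu h/a$), and let $\varepsilon^{h,t_n}=\|\mathcal{I}(\boldsymbol U^{h,t_n})-u(\cdot,t_n)\|_{L^1([0,1])}$, where $u(x,t_n)=u_0(x-at_n \bmod 1)$. Then $\mathcal{I}(\boldsymbol U^{h,0})(x)=I(x+\delta)$, for all $n$ one has $\mathcal{I}(\boldsymbol U^{h,t_n})(x)=\mathcal{I}(\boldsymbol U^{h,0})(x-n\mu h\bmod 1)$, and $$\sup_{n\ge0}\varepsilon^{h,t_n}\le \omega(u_0,h)+\omega(u_0,\delta).$$ Consequently the scheme has the commuting limits property $$\lim_{h\to0}\limsup_{n\to\infty}\varepsilon^{h,t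_n}=0=\limsup_{n\to\infty}\lim_{h\to0}\varepsilon^{h,t_n}.$$
   Context: Grid $x_j=jh$, $j=1,\dots,m$, on the periodic domain. State vector $\boldsymbol U=(\phi_1,\psi_1,\dots,\phi_m,\psi_m)\in\mathbb{R}^{2m}$. Nonlinear jet scheme interpolant $\mathcal{I}(\boldsymbol U)$: on each cell $[x_j,x_{j+1}]$ let $L_L(x)=\phi_j+\psi_j(x-x_j)$, $L_R(x)=\phi_{j+1}+\psi_{j+1}(x-x_{j+1})$; if $\psi_j\ne\psi_{j+1}$ and their intersection point $x_k$ lies in $(x_j,x_{j+1})$, set $\mathcal{I}(\boldsymbol U)=L_L$ on $[x_j,x_k]$ and $=L_R$ on $(x_k,x_{j+1}]$; otherwise use the linear interpolant $\phi_j+\frac{\phi_{j+1}-\phi_j}{h}(x-x_j)$ on the cell. One jet scheme step: $\boldsymbol U\mapsto\mathcal{E}(\mathcal{A}\,\mathcal{I}(\boldsymbol U))$, where $\mathcal{A}f(x)=f(x-\mu h)$ is the periodic shift by $a\Delta t$ and $\mathcal{E}f=(f(x_1),f'(x_1),\dots,f(x_m),f'(x_m))$ with left-sided derivatives taken at kinks; equivalently, $\phi_j^{n+1}=P(x_j-\mu h)$, $\psi_j^{n+1}=P'(x_j-\mu h)$ with $P=\mathcal{I}(\boldsymbol U^{h,t_n})$. The modulus of continuity is $\omega(u_0,r)=\sup\{|u_0(x)-u_0(y)|:x,y\in[0,1],\ |x-y|<r\}$. The commuting-limits identity is understood with $h=1/m$ ranging over those $m$ for which $N\in\mathbb{N}$,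 and exact arithmetic is assumed. *)

theory Defs
  imports "HOL-Analysis.Analysis"
begin

text \<open>A state vector U = (phi_j, psi_j)_j is represented as a function on nat;
  only the residues j mod m are used (periodic indexing). Grid points x_j = j h,
  h = 1/m, with x_0 = 0 identified with x_m = 1.\<close>

type_synonym jet_state = "nat \<Rightarrow> real \<times> real"

definition jet_interp :: "nat \<Rightarrow> jet_state \<Rightarrow> real \<Rightarrow> real" where
  "jet_interp m U x =
    (let h = 1 / real m; y = frac x; j = nat \<lfloor>y * real m\<rfloor>;
         xj = real j * h; xj1 = real (j + 1) * h;
         phiL = fst (U (j mod m)); psiL = snd (U (j mod m));
         phiR = fst (U ((j + 1) mod m)); psiR = snd (U ((j + 1) mod m));
         xk = (phiR - phiL + psiL * xj - psiR * xj1) / (psiL - psiR)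
     in if psiL \<noteq> psiR \<and> xj < xk \<and> xk < xj1
        then (if y \<le> xk then phiL + psiL * (y - xj) else phiR + psiR * (y - xj1))
        else phiL + (phiR - phiL) / h * (y - xj))"

definition left_deriv :: "(real \<Rightarrow> real) \<Rightarrow> real \<Rightarrow> real" where
  "left_deriv f x = (THE D. (f has_real_derivative D) (at_left x))"

definition jet_step :: "nat \<Rightarrow> real \<Rightarrow> jet_state \<Rightarrow> jet_state" where
  "jet_step m \<mu> U = (\<lambda>j. let P = jet_interp m U; z = real j / real m - \<mu> * (1 / real m)
                          in (P z, left_deriv P z))"

definition jet_iter :: "nat \<Rightarrow> real \<Rightarrow> jet_state \<Rightarrow> nat \<Rightarrow> jet_state" where
  "jet_iter m \<mu> U n = (jet_step m \<mu> ^^ n) U"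

definition phat :: "nat \<Rightarrow> (real \<Rightarrow> real) \<Rightarrow> nat \<Rightarrow> real" where
  "phat m u0 j = u0 (real (j mod m) / real m)"

definition jet_init :: "nat \<Rightarrow> (real \<Rightarrow> real) \<Rightarrow> real \<Rightarrow> jet_state" where
  "jet_init m u0 \<delta> = (\<lambda>j.
     (phat m u0 j + (phat m u0 (j + 1) - phat m u0 j) / (1 / real m) * \<delta>,
      (phat m u0 (j + 1) - phat m u0 j) / (1 / real m)))"

definition lin_interp :: "nat \<Rightarrow> (real \<Rightarrow> real) \<Rightarrow> real \<Rightarrow> real" where
  "lin_interp m u0 x =
    (let h = 1 / real m; y = frac x; j = nat \<lfloor>y * real m\<rfloor>
     in phat m u0 j + (phat m u0 (j + 1) - phat m u0 j) / h * (y - real j * h))"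

definition modulus :: "(real \<Rightarrow> real) \<Rightarrow> real \<Rightarrow> real" where
  "modulus u0 r = Sup {\<bar>u0 x - u0 y\<bar> | x y. x \<in> {0..1} \<and> y \<in> {0..1} \<and> \<bar>x - y\<bar> < r}"

text \<open>Pointwise error |I(U^{h,t_n})(x) - u(x,t_n)|, with t_n = n dt, dt = mu h / a,
  u(x,t) = u0(x - a t mod 1).\<close>
definition jet_err_fun :: "real \<Rightarrow> nat \<Rightarrow> real \<Rightarrow> (real \<Rightarrow> real) \<Rightarrow> real \<Rightarrow> nat \<Rightarrow> real \<Rightarrow> real" where
  "jet_err_fun a m \<mu> u0 \<delta> n x =
     \<bar>jet_interp m (jet_iter m \<mu> (jet_init m u0 \<delta>) n) x
        - u0 (frac (x - a * (real n * (\<mu> * (1 / real m) / a))))\<bar>"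

definition jet_error :: "real \<Rightarrow> nat \<Rightarrow> real \<Rightarrow> (real \<Rightarrow> real) \<Rightarrow> real \<Rightarrow> nat \<Rightarrow> real" where
  "jet_error a m \<mu> u0 \<delta> n = integral {0..1} (jet_err_fun a m \<mu> u0 \<delta> n)"

end

theory Submission
  imports Defs
begin


definition PP :: "nat \<Rightarrow> (real \<Rightarrow> real) \<Rightarrow> int \<Rightarrow> real" where
  "PP m u0 k = u0 (real_of_int k / real m)"
definition SS :: "nat \<Rightarrow> (real \<Rightarrow> real) \<Rightarrow> int \<Rightarrow> real" where
  "SS m u0 k = (PP m u0 (k+1) - PP m u0 k) * real m"

lemma per_nat:
  assumes "\<forall>x. u0 (x+1) = u0 (x::real)"
  shows "u0 (x + real n) = u0 x"
proof (induction n)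
  case (Suc n)
  have "u0 (x + real (Suc n)) = u0 ((x + real n) + 1)" by (simp add: algebra_simps)
  also have "\<dots> = u0 (x + real n)" using assms by blast
  finally show ?case using Suc by simp
qed simp

lemma per_int:
  assumes "\<forall>x. u0 (x+1) = u0 (x::real)"
  shows "u0 (x + real_of_int n) = u0 x"
proof (cases "n \<ge> 0")
  case True
  then obtain k where "n = int k" by (metis nonneg_eq_int)
  then show ?thesis using per_nat[OF assms] by simp
next
  case False
  define k where "k = nat (- n)"
  have k: "n = - int k" using False unfolding k_def by simp
  have "u0 ((x - real k) + real k) = u0 (x - real k)" using per_nat[OF assms] by blast
  then show ?thesis using k by simp
qed

lemma phat_eq:
  assumes "\<forall>x. u0 (x+1) = u0 (x::real)" "m > 0"
  shows "phat m u0 j = u0 (real j / real m)"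
proof -
  have rj: "real j = real (j mod m) + real m * real (j div m)"
  proof -
    have "real j = real (j mod m + m * (j div m))" by simp
    then show ?thesis by (simp only: of_nat_add of_nat_mult)
  qed
  have "real j / real m = real (j mod m) / real m + real_of_int (int (j div m))"
    using assms(2) rj by (simp add: field_simps)
  then show ?thesis unfolding phat_def using per_int[OF assms(1), of "real (j mod m) / real m" "int (j div m)"] by simp
qed

lemma Lchar0:
  assumes per: "\<forall>x. u0 (x+1) = u0 (x::real)" and m: "m > 0"
  shows "lin_interp m u0 t = PP m u0 \<lfloor>t * real m\<rfloor> + SS m u0 \<lfloor>t * real m\<rfloor> * (t - real_of_int \<lfloor>t * real m\<rfloor> / real m)"
proof -
  define i where "i = \<lfloor>t * real m\<rfloor>"
  have fl: "\<lfloor>frac t * real m\<rfloor> = i - \<lfloor>t\<rfloor> * int m"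
  proof -
    have "frac t * real m = t * real m - of_int (\<lfloor>t\<rfloor> * int m)" by (simp add: frac_def algebra_simps)
    then have "\<lfloor>frac t * real m\<rfloor> = \<lfloor>t * real m - of_int (\<lfloor>t\<rfloor> * int m)\<rfloor>" by (simp only:)
    also have "\<dots> = i - \<lfloor>t\<rfloor> * int m" unfolding i_def by (rule floor_diff_of_int)
    finally show ?thesis .
  qed
  have nn: "0 \<le> i - \<lfloor>t\<rfloor> * int m" using fl[symmetric] by (simp add: frac_ge_0)
  define j where "j = nat \<lfloor>frac t * real m\<rfloor>"
  have rj: "real j = real_of_int i - real_of_int \<lfloor>t\<rfloor> * real m" unfolding j_def fl using nn by simp
  have e1: "phat m u0 j = PP m u0 i"
  proof -
    have "real j / real m = real_of_int i / real m + real_of_int (- \<lfloor>t\<rfloor>)" using rj m by (simp add: field_simps)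
    then show ?thesis using phat_eq[OF per m] per_int[OF per, of "real_of_int i / real m" "- \<lfloor>t\<rfloor>"] unfolding PP_def by simp
  qed
  have e2: "phat m u0 (j+1) = PP m u0 (i+1)"
  proof -
    have "real (j+1) / real m = real_of_int (i+1) / real m + real_of_int (- \<lfloor>t\<rfloor>)" using rj m by (simp add: field_simps)
    then show ?thesis using phat_eq[OF per m] per_int[OF per, of "real_of_int (i+1) / real m" "- \<lfloor>t\<rfloor>"] unfolding PP_def by simp
  qed
  have e3: "frac t - real j * (1 / real m) = t - real_of_int i / real m"
    using rj m by (simp add: frac_def field_simps)
  show ?thesis unfolding lin_interp_def Let_def j_def[symmetric] i_def[symmetric] e1 e2 e3
    by (simp add: SS_def)
qed

lemma Lchar:
  assumes per: "\<forall>x. u0 (x+1) = u0 (x::real)" and m: "m > 0"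
    and k: "real_of_int k \<le> t * real m" "t * real m \<le> real_of_int k + 1"
  shows "lin_interp m u0 t = PP m u0 k + SS m u0 k * (t - real_of_int k / real m)"
proof (cases "t * real m = real_of_int k + 1")
  case True
  then have "\<lfloor>t * real m\<rfloor> = k + 1" by simp
  moreover have "t = (real_of_int k + 1) / real m" using True m by (simp add: field_simps)
  ultimately show ?thesis using Lchar0[OF per m, of t] m by (simp add: SS_def field_simps)
next
  case False
  then have "\<lfloor>t * real m\<rfloor> = k" using k by (simp add: floor_eq_iff)
  then show ?thesis using Lchar0[OF per m, of t] by simp
qed


lemma ceil_aux: "real_of_int (\<lceil>t\<rceil> - 1) < t" "t \<le> real_of_int (\<lceil>t\<rceil> - 1) + 1"
  by linarith+

lemma left_deriv_L:
  assumes per: "\<forall>x. u0 (x+1) = u0 (x::real)" and m: "m > 0"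
  shows "left_deriv (\<lambda>x. lin_interp m u0 (x + c)) z = SS m u0 (\<lceil>(z + c) * real m\<rceil> - 1)"
proof -
  define k where "k = \<lceil>(z + c) * real m\<rceil> - 1"
  have k1: "real_of_int k < (z + c) * real m" "(z + c) * real m \<le> real_of_int k + 1"
    unfolding k_def using ceil_aux by auto
  define G where "G = (\<lambda>x. PP m u0 k + SS m u0 k * (x + c - real_of_int k / real m))"
  have dG: "(G has_real_derivative SS m u0 k) (at_left z)"
    unfolding G_def by (auto intro!: derivative_eq_intros)
  have lo: "real_of_int k / real m - c < z" using k1 m by (simp add: field_simps)
  have ev: "eventually (\<lambda>x. G x = lin_interp m u0 (x + c)) (at_left z)"
  proof -
    have "eventually (\<lambda>x. x \<in> {real_of_int k / real m - c<..<z}) (at_left z)"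
      using eventually_at_left_real[OF lo] .
    then show ?thesis
    proof (rule eventually_mono)
      fix x assume x: "x \<in> {real_of_int k / real m - c<..<z}"
      have "real_of_int k \<le> (x + c) * real m" using x m by (simp add: field_simps)
      moreover have "(x + c) * real m \<le> real_of_int k + 1"
      proof -
        have "(x + c) * real m \<le> (z + c) * real m" using x by (intro mult_right_mono) auto
        then show ?thesis using k1 by linarith
      qed
      ultimately show "G x = lin_interp m u0 (x + c)"
        using Lchar[OF per m] unfolding G_def by simp
    qed
  qed
  have ez: "G z = lin_interp m u0 (z + c)"
    using Lchar[OF per m, of k "z + c"] k1 unfolding G_def by simp
  have d: "((\<lambda>x. lin_interp m u0 (x + c)) has_real_derivative SS m u0 k) (at_left z)"
    using dG has_field_derivative_cong_eventually[OF ev ez] by simp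
  show ?thesis unfolding left_deriv_def k_def[symmetric]
  proof (rule the_equality)
    show "((\<lambda>x. lin_interp m u0 (x + c)) has_real_derivative SS m u0 k) (at_left z)" by (rule d)
  next
    fix D assume "((\<lambda>x. lin_interp m u0 (x + c)) has_real_derivative D) (at_left z)"
    then show "D = SS m u0 k" using has_field_derivative_unique[OF _ d] by simp
  qed
qed

lemma cell_alg:
  fixes h xj xj1 y r A sL sR phiL phiR :: real
  assumes "h > 0" "xj1 = xj + h" "xj \<le> y" "y < xj1" "0 < r" "r \<le> 1"
    "phiL = A + sL * (r * h)" "phiR = A + sL * h + sR * (r * h)"
  shows "(if sL \<noteq> sR \<and> xj < (phiR - phiL + sL * xj - sR * xj1) / (sL - sR) \<and> (phiR - phiL + sL * xj - sR * xj1) / (sL - sR) < xj1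
          then (if y \<le> (phiR - phiL + sL * xj - sR * xj1) / (sL - sR) then phiL + sL * (y - xj) else phiR + sR * (y - xj1))
          else phiL + (phiR - phiL) / h * (y - xj))
       = (if r * h + (y - xj) \<le> h then A + sL * (r * h + (y - xj)) else A + sL * h + sR * (r * h + (y - xj) - h))"
proof (cases "sL = sR")
  case True
  have e0: "phiR - phiL = sL * h" using True assms by (simp add: algebra_simps)
  have e1: "phiL + (phiR - phiL) / h * (y - xj) = A + sL * (r * h + (y - xj))"
    unfolding e0 using assms(1,7) by (simp add: algebra_simps)
  have e2: "A + sL * h + sR * (r * h + (y - xj) - h) = A + sL * (r * h + (y - xj))"
    using True by (simp add: algebra_simps)
  show ?thesis unfolding e1 e2 using True by simp
next
  case False
  have num: "phiR - phiL + sL * xj - sR * xj1 = (sL - sR) * (xj + h - r * h)"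
    using assms by (simp add: algebra_simps)
  have xk: "(phiR - phiL + sL * xj - sR * xj1) / (sL - sR) = xj + h - r * h"
    unfolding num using False by simp
  show ?thesis
  proof (cases "r = 1")
    case True
    have c: "\<not> (xj < xj + h - r * h)" using True by simp
    have e0: "phiR - phiL = sR * h" using True assms by (simp add: algebra_simps)
    have e1: "phiL + (phiR - phiL) / h * (y - xj) = A + sL * h + sR * (y - xj)"
      unfolding e0 using assms(1,7) True by simp
    show ?thesis
    proof (cases "y = xj")
      case True
      then show ?thesis unfolding xk e1 using c \<open>r = 1\<close> by simp
    next
      case False
      then have "\<not> (r * h + (y - xj) \<le> h)" using assms(3) \<open>r = 1\<close> by simp
      then show ?thesis unfolding xk e1 using c \<open>r = 1\<close> by (simp add: algebra_simps)
    qed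
  next
    case r: False
    then have c: "xj < xj + h - r * h" "xj + h - r * h < xj1" using assms by (auto simp: algebra_simps)
    have iff: "(y \<le> xj + h - r * h) = (r * h + (y - xj) \<le> h)" by linarith
    show ?thesis
    proof (cases "r * h + (y - xj) \<le> h")
      case True
      then show ?thesis unfolding xk iff using c False assms(7) by (simp add: algebra_simps)
    next
      case F: False
      then show ?thesis unfolding xk iff using c False assms(2,8) by (simp add: algebra_simps)
    qed
  qed
qed

lemma recon:
  assumes per: "\<forall>x. u0 (x+1) = u0 (x::real)" and m: "m > 0"
    and U: "\<forall>j. U (j mod m) = (lin_interp m u0 (real j / real m + c), SS m u0 (\<lceil>real j + c * real m\<rceil> - 1))"
  shows "jet_interp m U x = lin_interp m u0 (x + c)"
proof -
  define h where "h = 1 / real m"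
  have h: "h > 0" using m unfolding h_def by simp
  define y where "y = frac x"
  define j where "j = nat \<lfloor>y * real m\<rfloor>"
  have y01: "0 \<le> y" "y < 1" unfolding y_def by (auto simp: frac_lt_1)
  have j0: "0 \<le> \<lfloor>y * real m\<rfloor>" using y01 by simp
  have rj: "real j = real_of_int \<lfloor>y * real m\<rfloor>" unfolding j_def using j0 by simp
  have jy: "real j \<le> y * real m" "y * real m < real j + 1" unfolding rj by linarith+
  define xj where "xj = real j * h"
  define xj1 where "xj1 = real (j+1) * h"
  have xjy: "xj \<le> y" "y < xj1" "xj1 = xj + h"
    using jy m unfolding xj_def xj1_def h_def by (auto simp: field_simps)
  define k where "k = \<lceil>real j + c * real m\<rceil> - 1"
  have k1: "\<lceil>real (j+1) + c * real m\<rceil> - 1 = k + 1"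
  proof -
    have "real (j+1) + c * real m = (real j + c * real m) + of_int 1" by simp
    then show ?thesis unfolding k_def by (simp only: ceiling_add_of_int)
  qed
  define r where "r = real j + c * real m - real_of_int k"
  have r: "0 < r" "r \<le> 1"
  proof -
    have "real_of_int \<lceil>real j + c * real m\<rceil> - 1 < real j + c * real m \<and> real j + c * real m \<le> real_of_int \<lceil>real j + c * real m\<rceil>" by (rule ceiling_correct)
    then show "0 < r" "r \<le> 1" unfolding r_def k_def of_int_diff of_int_1 by linarith+
  qed
  define A where "A = PP m u0 k"
  define sL where "sL = SS m u0 k"
  define sR where "sR = SS m u0 (k+1)"
  have PP1: "PP m u0 (k+1) = A + sL * h" unfolding A_def sL_def SS_def h_def using m by simp
  define phiL where "phiL = A + sL * (r * h)"
  define phiR where "phiR = A + sL * h + sR * (r * h)"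
  have UL: "U (j mod m) = (phiL, sL)"
  proof -
    have "lin_interp m u0 (real j / real m + c) = PP m u0 k + SS m u0 k * ((real j / real m + c) - real_of_int k / real m)"
    proof (rule Lchar[OF per m])
      have e: "(real j / real m + c) * real m = real_of_int k + r" using m by (simp add: r_def field_simps)
      show "real_of_int k \<le> (real j / real m + c) * real m" "(real j / real m + c) * real m \<le> real_of_int k + 1"
        unfolding e using r by simp_all
    qed
    also have "\<dots> = phiL" unfolding phiL_def A_def sL_def r_def h_def using m by (simp add: field_simps)
    finally show ?thesis using U k_def sL_def by simp
  qed
  have UR: "U ((j+1) mod m) = (phiR, sR)"
  proof -
    have "lin_interp m u0 (real (j+1) / real m + c) = PP m u0 (k+1) + SS m u0 (k+1) * ((real (j+1) / real m + c) - real_of_int (k+1) / real m)"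
    proof (rule Lchar[OF per m])
      have e: "(real (j+1) / real m + c) * real m = real_of_int (k+1) + r" using m by (simp add: r_def field_simps)
      show "real_of_int (k+1) \<le> (real (j+1) / real m + c) * real m" "(real (j+1) / real m + c) * real m \<le> real_of_int (k+1) + 1"
        unfolding e using r by simp_all
    qed
    also have "\<dots> = phiR" unfolding phiR_def PP1 sR_def r_def h_def using m by (simp add: field_simps)
    finally show ?thesis using U[rule_format, of "j+1"] k1 sR_def by (simp add: add.commute)
  qed
  have "jet_interp m U x = (if sL \<noteq> sR \<and> xj < (phiR - phiL + sL * xj - sR * xj1) / (sL - sR) \<and> (phiR - phiL + sL * xj - sR * xj1) / (sL - sR) < xj1
          then (if y \<le> (phiR - phiL + sL * xj - sR * xj1) / (sL - sR) then phiL + sL * (y - xj) else phiR + sR * (y - xj1))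
          else phiL + (phiR - phiL) / h * (y - xj))"
    unfolding jet_interp_def Let_def y_def[symmetric] j_def[symmetric] h_def[symmetric]
      xj_def[symmetric] xj1_def[symmetric] UL UR fst_conv snd_conv ..
  also have "\<dots> = (if r * h + (y - xj) \<le> h then A + sL * (r * h + (y - xj)) else A + sL * h + sR * (r * h + (y - xj) - h))"
    by (rule cell_alg) (use h xjy r phiL_def phiR_def in auto)
  also have "\<dots> = lin_interp m u0 (y + c)"
  proof (cases "r * h + (y - xj) \<le> h")
    case True
    have "lin_interp m u0 (y + c) = PP m u0 k + SS m u0 k * ((y + c) - real_of_int k / real m)"
    proof (rule Lchar[OF per m])
      have "(y + c) * real m = real_of_int k + r + (y - xj) * real m"
        unfolding r_def xj_def h_def using m by (simp add: field_simps)
      moreover have "0 \<le> (y - xj) * real m" using xjy by simp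
      moreover have "r + (y - xj) * real m \<le> 1"
      proof -
        have "(r*h + (y - xj)) * real m \<le> h * real m" using True m by (intro mult_right_mono) auto
        moreover have "h * real m = 1" "(r*h + (y - xj)) * real m = r + (y - xj) * real m"
          using m unfolding h_def by (simp_all add: algebra_simps)
        ultimately show ?thesis by simp
      qed
      ultimately show "real_of_int k \<le> (y + c) * real m" "(y + c) * real m \<le> real_of_int k + 1"
        using r by linarith+
    qed
    also have "\<dots> = A + sL * (r * h + (y - xj))"
      unfolding A_def sL_def r_def xj_def h_def using m by (simp add: field_simps)
    finally show ?thesis using True by simp
  next
    case False
    have "lin_interp m u0 (y + c) = PP m u0 (k+1) + SS m u0 (k+1) * ((y + c) - real_of_int (k+1) / real m)"
    proof (rule Lchar[OF per m])
      have "(y + c) * real m = real_of_int k + r + (y - xj) * real m"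
        unfolding r_def xj_def h_def using m by (simp add: field_simps)
      moreover have "(y - xj) * real m < 1" using xjy m unfolding h_def by (simp add: field_simps)
      moreover have "1 < r + (y - xj) * real m"
      proof -
        have "h * real m < (r*h + (y - xj)) * real m" using False m by (intro mult_strict_right_mono) auto
        moreover have "h * real m = 1" "(r*h + (y - xj)) * real m = r + (y - xj) * real m"
          using m unfolding h_def by (simp_all add: algebra_simps)
        ultimately show ?thesis by simp
      qed
      ultimately show "real_of_int (k+1) \<le> (y + c) * real m" "(y + c) * real m \<le> real_of_int (k+1) + 1"
        using r by simp_all
    qed
    also have "\<dots> = A + sL * h + sR * (r * h + (y - xj) - h)"
      unfolding PP1 sR_def r_def xj_def h_def using m by (simp add: field_simps)
    finally show ?thesis using False by simp
  qed
  also have "\<dots> = lin_interp m u0 (x + c)"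
  proof -
    have "x + c = (y + c) + of_int \<lfloor>x\<rfloor>" unfolding y_def frac_def by simp
    then have "frac (x + c) = frac ((y + c) + of_int \<lfloor>x\<rfloor>)" by (simp only:)
    then have "frac (x + c) = frac (y + c)" by (simp only: frac_add_of_int_right)
    then show ?thesis unfolding lin_interp_def Let_def by simp
  qed
  finally show ?thesis .
qed




lemma L_per: "lin_interp m u0 (t + real_of_int n) = lin_interp m u0 t"
  unfolding lin_interp_def Let_def by simp

lemma L_frac: "lin_interp m u0 (frac t + d) = lin_interp m u0 (t + d)"
proof -
  have "frac t + d = (t + d) + real_of_int (- \<lfloor>t\<rfloor>)" unfolding frac_def by simp
  then show ?thesis using L_per by metis
qed

lemma SS_per:
  assumes per: "\<forall>x. u0 (x+1) = u0 (x::real)" and m: "m > 0"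
  shows "SS m u0 (k + int m * q) = SS m u0 k"
proof -
  have P: "PP m u0 (i + int m * q) = PP m u0 i" for i
  proof -
    have "real_of_int (i + int m * q) / real m = real_of_int i / real m + real_of_int q" using m by (simp add: field_simps)
    then show ?thesis unfolding PP_def using per_int[OF per] by simp
  qed
  show ?thesis unfolding SS_def using P[of k] P[of "k+1"] by (simp add: algebra_simps)
qed

lemma per_data:
  assumes per: "\<forall>x. u0 (x+1) = u0 (x::real)" and m: "m > 0"
  shows "lin_interp m u0 (real (j mod m) / real m + c) = lin_interp m u0 (real j / real m + c)"
    and "SS m u0 (\<lceil>real (j mod m) + c * real m\<rceil> - 1) = SS m u0 (\<lceil>real j + c * real m\<rceil> - 1)"
proof -
  have rj: "real j = real (j mod m) + real m * real (j div m)"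
  proof -
    have "real j = real (j mod m + m * (j div m))" by simp
    then show ?thesis by (simp only: of_nat_add of_nat_mult)
  qed
  have "real j / real m + c = (real (j mod m) / real m + c) + real_of_int (int (j div m))"
    using m rj by (simp add: field_simps)
  then show "lin_interp m u0 (real (j mod m) / real m + c) = lin_interp m u0 (real j / real m + c)"
    using L_per by metis
  have "real j + c * real m = (real (j mod m) + c * real m) + real_of_int (int m * int (j div m))"
    using rj by simp
  then have "\<lceil>real j + c * real m\<rceil> - 1 = (\<lceil>real (j mod m) + c * real m\<rceil> - 1) + int m * int (j div m)"
    by (simp only: ceiling_add_of_int)
  then show "SS m u0 (\<lceil>real (j mod m) + c * real m\<rceil> - 1) = SS m u0 (\<lceil>real j + c * real m\<rceil> - 1)"
    using SS_per[OF per m] by metis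
qed

lemma init_hyp:
  assumes per: "\<forall>x. u0 (x+1) = u0 (x::real)" and m: "m > 0" and d: "0 < d" "d < 1 / real m"
  shows "\<forall>j. jet_init m u0 d (j mod m) = (lin_interp m u0 (real j / real m + d), SS m u0 (\<lceil>real j + d * real m\<rceil> - 1))"
proof
  fix j
  have dm: "0 < d * real m" "d * real m < 1" using d m by (auto simp: field_simps)
  have c: "\<lceil>real j + d * real m\<rceil> - 1 = int j"
  proof -
    have "\<lceil>real j + d * real m\<rceil> = int j + 1" using dm by (simp add: ceiling_eq_iff)
    then show ?thesis by simp
  qed
  have p1: "phat m u0 (j mod m) = PP m u0 (int j)" unfolding phat_def PP_def using phat_eq[OF per m, of j] by (simp add: phat_def)
  have p2: "phat m u0 (j mod m + 1) = PP m u0 (int j + 1)"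
  proof -
    have "(j mod m + 1) mod m = (j + 1) mod m" by (simp add: mod_Suc_eq)
    then have "phat m u0 (j mod m + 1) = phat m u0 (j + 1)" unfolding phat_def by simp
    then show ?thesis using phat_eq[OF per m, of "j+1"] unfolding PP_def by (simp add: add.commute)
  qed
  have L: "lin_interp m u0 (real j / real m + d) = PP m u0 (int j) + SS m u0 (int j) * d"
  proof -
    have e: "(real j / real m + d) * real m = real j + d * real m" using m by (simp add: field_simps)
    have "lin_interp m u0 (real j / real m + d) = PP m u0 (int j) + SS m u0 (int j) * ((real j / real m + d) - real_of_int (int j) / real m)"
      by (rule Lchar[OF per m]) (simp_all only: e, use dm in simp_all)
    then show ?thesis by simp
  qed
  show "jet_init m u0 d (j mod m) = (lin_interp m u0 (real j / real m + d), SS m u0 (\<lceil>real j + d * real m\<rceil> - 1))"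
    unfolding jet_init_def p1 p2 L c SS_def by simp
qed

lemma claim1:
  assumes per: "\<forall>x. u0 (x+1) = u0 (x::real)" and m: "m > 0" and d: "0 < d" "d < 1 / real m"
  shows "jet_interp m (jet_init m u0 d) x = lin_interp m u0 (x + d)"
  by (rule recon[OF per m init_hyp[OF per m d]])

lemma iter_eq:
  assumes per: "\<forall>x. u0 (x+1) = u0 (x::real)" and m: "m > 0" and d: "0 < d" "d < 1 / real m"
  shows "jet_interp m (jet_iter m \<mu> (jet_init m u0 d) n) x = lin_interp m u0 (x + (d - real n * \<mu> / real m))"
proof (induction n arbitrary: x)
  case 0
  then show ?case using claim1[OF per m d] by (simp add: jet_iter_def)
next
  case (Suc n)
  define cn where "cn = d - real n * \<mu> / real m"
  define c where "c = d - real (Suc n) * \<mu> / real m"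
  have P: "jet_interp m (jet_iter m \<mu> (jet_init m u0 d) n) = (\<lambda>x. lin_interp m u0 (x + cn))"
    using Suc unfolding cn_def by auto
  have it: "jet_iter m \<mu> (jet_init m u0 d) (Suc n) = jet_step m \<mu> (jet_iter m \<mu> (jet_init m u0 d) n)"
    unfolding jet_iter_def by simp
  have val: "jet_step m \<mu> (jet_iter m \<mu> (jet_init m u0 d) n) i = (lin_interp m u0 (real i / real m + c), SS m u0 (\<lceil>real i + c * real m\<rceil> - 1))" for i
  proof -
    have z: "real i / real m - \<mu> * (1 / real m) + cn = real i / real m + c"
      unfolding cn_def c_def by (simp add: field_simps add_divide_distrib)
    have z2: "(real i / real m + c) * real m = real i + c * real m" using m by (simp add: field_simps)
    show ?thesis unfolding jet_step_def Let_def P left_deriv_L[OF per m] z z2 ..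
  qed
  have hyp: "\<forall>j. jet_step m \<mu> (jet_iter m \<mu> (jet_init m u0 d) n) (j mod m) = (lin_interp m u0 (real j / real m + c), SS m u0 (\<lceil>real j + c * real m\<rceil> - 1))"
    using val per_data[OF per m] by simp
  show ?case unfolding it recon[OF per m hyp] c_def ..
qed



lemma cont_pieces:
  fixes f :: "real \<Rightarrow> real" and g :: "int \<Rightarrow> real"
  assumes gl: "\<And>k. g k < g (k+1)" and c: "\<And>k. continuous_on {g k..g (k+1)} f"
    and k: "g k \<le> t" "t < g (k+1)"
  shows "isCont f t"
proof -
  have c1: "continuous_on {g (k-1)..g k} f" using c[of "k-1"] by simp
  have "continuous_on ({g (k-1)..g k} \<union> {g k..g (k+1)}) f"
    by (rule continuous_on_closed_Un) (use c c1 in auto)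
  moreover have "{g (k-1)..g k} \<union> {g k..g (k+1)} = {g (k-1)..g (k+1)}"
    using gl[of "k-1"] gl[of k] by auto
  ultimately have "continuous_on {g (k-1)..g (k+1)} f" by simp
  moreover have "t \<in> interior {g (k-1)..g (k+1)}" using gl[of "k-1"] k by simp
  ultimately show ?thesis using continuous_on_interior by blast
qed

lemma u0_cont:
  fixes u0 :: "real \<Rightarrow> real"
  assumes per: "\<forall>x. u0 (x+1) = u0 (x::real)" and cont: "continuous_on {0..1} u0"
  shows "isCont u0 t"
proof -
  have c: "continuous_on {real_of_int k..real_of_int (k+1)} u0" for k :: int
  proof -
    have "continuous_on {real_of_int k..real_of_int (k+1)} (\<lambda>x. u0 (x - real_of_int k))"
      by (rule continuous_on_compose2[OF cont]) (auto intro!: continuous_intros)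
    moreover have "u0 (x - real_of_int k) = u0 x" for x using per_int[OF per, of "x - real_of_int k" k] by simp
    ultimately show ?thesis by simp
  qed
  have gl: "real_of_int k < real_of_int (k+1)" for k :: int by simp
  have k: "real_of_int \<lfloor>t\<rfloor> \<le> t" "t < real_of_int (\<lfloor>t\<rfloor> + 1)" by linarith+
  show ?thesis by (rule cont_pieces[where g=real_of_int and f=u0 and k="\<lfloor>t\<rfloor>" and t=t]) (use gl c k in auto)
qed

lemma L_cont:
  assumes per: "\<forall>x. u0 (x+1) = u0 (x::real)" and m: "m > 0"
  shows "isCont (lin_interp m u0) t"
proof (rule cont_pieces[where g = "\<lambda>k. real_of_int k / real m" and k = "\<lfloor>t * real m\<rfloor>"])
  fix k :: int
  show "real_of_int k / real m < real_of_int (k+1) / real m" using m by (simp add: divide_strict_right_mono)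
  have "continuous_on {real_of_int k / real m..real_of_int (k+1) / real m} (\<lambda>x. PP m u0 k + SS m u0 k * (x - real_of_int k / real m))"
    by (auto intro!: continuous_intros)
  moreover have "x \<in> {real_of_int k / real m..real_of_int (k+1) / real m} \<Longrightarrow> PP m u0 k + SS m u0 k * (x - real_of_int k / real m) = lin_interp m u0 x" for x
    using Lchar[OF per m, of k x] m by (simp add: field_simps)
  ultimately show "continuous_on {real_of_int k / real m..real_of_int (k+1) / real m} (lin_interp m u0)"
    using continuous_on_eq by blast
next
  show "real_of_int \<lfloor>t * real m\<rfloor> / real m \<le> t" using m by (simp add: divide_le_eq)
  show "t < real_of_int (\<lfloor>t * real m\<rfloor> + 1) / real m" using m by (simp add: less_divide_eq)
qed

lemma mod_bdd:
  assumes cont: "continuous_on {0..1} (u0::real\<Rightarrow>real)"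
  shows "bdd_above {\<bar>u0 x - u0 y\<bar> | x y. x \<in> {0..1} \<and> y \<in> {0..1} \<and> \<bar>x - y\<bar> < r}"
proof -
  have "compact (u0 ` {0..1})" by (rule compact_continuous_image[OF cont]) simp
  then obtain B where B: "\<forall>z\<in>u0 ` {0..1}. \<bar>z\<bar> \<le> B" using compact_imp_bounded bounded_real by metis
  show ?thesis
  proof (rule bdd_aboveI)
    fix z assume "z \<in> {\<bar>u0 x - u0 y\<bar> | x y. x \<in> {0..1} \<and> y \<in> {0..1} \<and> \<bar>x - y\<bar> < r}"
    then obtain x y where z: "z = \<bar>u0 x - u0 y\<bar>" and xy: "x \<in> {0..1}" "y \<in> {0..1}" by blast
    have "\<bar>u0 x\<bar> \<le> B" "\<bar>u0 y\<bar> \<le> B" using B xy by auto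
    moreover have "\<bar>u0 x - u0 y\<bar> \<le> \<bar>u0 x\<bar> + \<bar>u0 y\<bar>" by (rule abs_triangle_ineq4)
    ultimately show "z \<le> 2 * B" using z by linarith
  qed
qed

lemma mod_upper:
  assumes cont: "continuous_on {0..1} (u0::real\<Rightarrow>real)" and "x \<in> {0..1}" "y \<in> {0..1}" "\<bar>x - y\<bar> < r"
  shows "\<bar>u0 x - u0 y\<bar> \<le> modulus u0 r"
  unfolding modulus_def by (rule cSup_upper[OF _ mod_bdd[OF cont]]) (use assms in blast)

lemma mod_nonneg:
  assumes cont: "continuous_on {0..1} (u0::real\<Rightarrow>real)" and "r > 0"
  shows "0 \<le> modulus u0 r"
  using mod_upper[OF cont, of 0 0 r] assms by simp

lemma mod_closed:
  assumes cont: "continuous_on {0..1} (u0::real\<Rightarrow>real)" and per: "\<forall>x. u0 (x+1) = u0 x"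
    and x: "x \<in> {0..1}" and y: "y \<in> {0..1}" and xy: "x \<le> y" "y - x \<le> r" and r: "r > 0"
  shows "\<bar>u0 x - u0 y\<bar> \<le> modulus u0 r"
proof (cases "y - x < r")
  case True
  then show ?thesis using mod_upper[OF cont x y] xy by simp
next
  case False
  then have yr: "y - x = r" using xy by simp
  define X where "X = (\<lambda>k. y - r * inverse (real (Suc k)))"
  have Xl: "X \<longlonglongrightarrow> y - r * 0"
    unfolding X_def by (intro tendsto_intros LIMSEQ_inverse_real_of_nat)
  have b: "\<bar>u0 x - u0 (X k)\<bar> \<le> modulus u0 r" for k
  proof (rule mod_upper[OF cont x])
    have i: "0 < inverse (real (Suc k))" "inverse (real (Suc k)) \<le> 1" by (auto simp: inverse_le_1_iff)
    have "r * inverse (real (Suc k)) \<le> r" using i r by (simp add: mult_le_cancel_left1)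
    moreover have "0 < r * inverse (real (Suc k))" using i r by simp
    ultimately show "X k \<in> {0..1}" "\<bar>x - X k\<bar> < r" unfolding X_def using x y yr by auto
  qed
  have "(\<lambda>k. \<bar>u0 x - u0 (X k)\<bar>) \<longlonglongrightarrow> \<bar>u0 x - u0 y\<bar>"
    using Xl u0_cont[OF per cont, of y] by (auto intro!: tendsto_intros isCont_tendsto_compose[where g=u0])
  then show ?thesis using LIMSEQ_le_const2 b by blast
qed

lemma mod_W:
  assumes cont: "continuous_on {0..1} (u0::real\<Rightarrow>real)" and per: "\<forall>x. u0 (x+1) = u0 x"
    and ab: "a \<le> b" "b - a \<le> r" and r: "r > 0" and ni: "\<not> (\<exists>n::int. a < real_of_int n \<and> real_of_int n < b)"
  shows "\<bar>u0 a - u0 b\<bar> \<le> modulus u0 r"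
proof -
  define n where "n = \<lfloor>a\<rfloor>"
  have "b \<le> real_of_int n + 1"
  proof (rule ccontr)
    assume "\<not> ?thesis"
    then have "a < real_of_int (n+1) \<and> real_of_int (n+1) < b" unfolding n_def by simp
    then show False using ni by blast
  qed
  moreover have nb: "real_of_int n \<le> a" unfolding n_def by simp
  ultimately have "\<bar>u0 (a - real_of_int n) - u0 (b - real_of_int n)\<bar> \<le> modulus u0 r"
    using ab r nb by (intro mod_closed[OF cont per]) auto
  moreover have "u0 (a - real_of_int n) = u0 a" "u0 (b - real_of_int n) = u0 b"
    using per_int[OF per, of "a - real_of_int n" n] per_int[OF per, of "b - real_of_int n" n] by simp_all
  ultimately show ?thesis by simp
qed

lemma mod_win:
  assumes cont: "continuous_on {0..1} (u0::real\<Rightarrow>real)" and per: "\<forall>x. u0 (x+1) = u0 x"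
    and m: "m > 0" and w: "real_of_int k \<le> p * real m" "p * real m \<le> real_of_int k + 1"
      "real_of_int k \<le> q * real m" "q * real m \<le> real_of_int k + 1"
    and d: "\<bar>p - q\<bar> \<le> r" and r: "r > 0"
  shows "\<bar>u0 p - u0 q\<bar> \<le> modulus u0 r"
proof -
  have ni: "\<not> (\<exists>n::int. a < real_of_int n \<and> real_of_int n < b)"
    if "real_of_int k \<le> a * real m" "b * real m \<le> real_of_int k + 1" for a b
  proof
    assume "\<exists>n::int. a < real_of_int n \<and> real_of_int n < b"
    then obtain n :: int where n: "a < real_of_int n" "real_of_int n < b" by blast
    have "a * real m < real_of_int n * real m" "real_of_int n * real m < b * real m"
      using n m by simp_all
    then have "real_of_int k < real_of_int (n * int m)" "real_of_int (n * int m) < real_of_int (k + 1)"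
      using that by simp_all
    then have "k < n * int m" "n * int m < k + 1" by (simp_all only: of_int_less_iff)
    then show False by simp
  qed
  show ?thesis
  proof (cases "p \<le> q")
    case True
    then show ?thesis using mod_W[OF cont per True _ r ni] w d by simp
  next
    case False
    then have "\<bar>u0 q - u0 p\<bar> \<le> modulus u0 r" using mod_W[OF cont per _ _ r ni] w d by simp
    then show ?thesis by (simp add: abs_minus_commute)
  qed
qed


lemma pw_bound:
  fixes u0 :: "real \<Rightarrow> real"
  assumes cont: "continuous_on {0..1} u0" and per: "\<forall>x. u0 (x+1) = u0 x"
    and m: "m > 0" and d: "0 < d" "d < 1 / real m"
  shows "\<bar>lin_interp m u0 (y + d) - u0 y\<bar> \<le> modulus u0 (1 / real m) + modulus u0 d"
proof -
  define M1 where "M1 = modulus u0 (1 / real m)"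
  define M2 where "M2 = modulus u0 d"
  have hpos: "1 / real m > 0" using m by simp
  have M1: "0 \<le> M1" unfolding M1_def using mod_nonneg[OF cont hpos] .
  have M2: "0 \<le> M2" unfolding M2_def using mod_nonneg[OF cont d(1)] .
  have rm: "real m > 0" using m by simp
  have dm: "d * real m < 1" "0 < d * real m" using d m by (auto simp: field_simps)
  define i where "i = \<lfloor>(y + d) * real m\<rfloor>"
  have i1: "real_of_int i \<le> (y + d) * real m" "(y + d) * real m < real_of_int i + 1" unfolding i_def by linarith+
  have ym: "(y + d) * real m = y * real m + d * real m" by (simp add: algebra_simps)
  define lam where "lam = (y + d) * real m - real_of_int i"
  have lam: "0 \<le> lam" "lam < 1" unfolding lam_def using i1 by auto
  have im: "real_of_int i / real m * real m = real_of_int i" "real_of_int (i+1) / real m * real m = real_of_int i + 1"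
    using rm by simp_all
  have Lv: "lin_interp m u0 (y + d) = (1 - lam) * PP m u0 i + lam * PP m u0 (i+1)"
  proof -
    have "lin_interp m u0 (y + d) = PP m u0 i + SS m u0 i * ((y + d) - real_of_int i / real m)"
      by (rule Lchar[OF per m]) (use i1 in auto)
    also have "SS m u0 i * ((y + d) - real_of_int i / real m) = (PP m u0 (i+1) - PP m u0 i) * lam"
      unfolding SS_def lam_def using rm by (simp add: field_simps)
    finally show ?thesis by (simp add: algebra_simps)
  qed
  have P: "PP m u0 k = u0 (real_of_int k / real m)" for k unfolding PP_def ..
  have B1: "\<bar>PP m u0 i - u0 y\<bar> \<le> M1"
  proof (cases "real_of_int i \<le> y * real m")
    case True
    have "y * real m - real_of_int i < 1" using i1 ym dm by linarith
    moreover have "y - real_of_int i / real m = (y * real m - real_of_int i) / real m" using rm by (simp add: field_simps)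
    ultimately have "y - real_of_int i / real m < 1 / real m" using rm by (simp add: divide_strict_right_mono)
    moreover have "real_of_int i / real m \<le> y" using True rm by (simp add: field_simps)
    ultimately show ?thesis unfolding P M1_def
      by (intro mod_win[OF cont per m, where k = i]) (use True i1 ym dm im hpos in auto)
  next
    case False
    have "real_of_int i - y * real m < 1" using i1 ym dm by linarith
    moreover have "real_of_int i / real m - y = (real_of_int i - y * real m) / real m" using rm by (simp add: field_simps)
    ultimately have "real_of_int i / real m - y < 1 / real m" using rm by (simp add: divide_strict_right_mono)
    moreover have "y \<le> real_of_int i / real m" using False rm by (simp add: field_simps)
    moreover have "real_of_int (i - 1) \<le> y * real m" using i1 ym dm by simp
    ultimately show ?thesis unfolding P M1_def
      by (intro mod_win[OF cont per m, where k = "i - 1"]) (use False im hpos in auto)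
  qed
  have B2: "\<bar>PP m u0 (i+1) - u0 y\<bar> \<le> M1 + M2" if lp: "lam > 0"
  proof (cases "\<exists>n::int. y < real_of_int n \<and> real_of_int n < y + d")
    case True
    then obtain n :: int where n: "y < real_of_int n" "real_of_int n < y + d" by blast
    have "y * real m < real_of_int n * real m" "real_of_int n * real m < (y + d) * real m"
      using n rm by simp_all
    then have "real_of_int (i - 1) < real_of_int (n * int m)" "real_of_int (n * int m) < real_of_int (i + 1)"
      using i1 ym dm by simp_all
    then have "i - 1 < n * int m" "n * int m < i + 1" by (simp_all only: of_int_less_iff)
    then have ni: "n * int m = i" by simp
    have nn: "real_of_int n = real_of_int i / real m"
    proof -
      have "real_of_int n * real m = real_of_int i" using ni by (metis of_int_mult of_int_of_nat_eq)
      then show ?thesis using rm by (simp add: field_simps)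
    qed
    have a1: "\<bar>u0 (real_of_int (i+1) / real m) - u0 (real_of_int i / real m)\<bar> \<le> M1"
      unfolding M1_def
      by (intro mod_win[OF cont per m, where k = i]) (use im hpos rm in \<open>auto simp: divide_simps\<close>)
    have a2: "\<bar>u0 (real_of_int i / real m) - u0 y\<bar> \<le> M2"
    proof -
      have "real_of_int (i - 1) \<le> y * real m" using i1 ym dm by simp
      moreover have "y * real m \<le> real_of_int (i - 1) + 1" using n nn rm by (simp add: field_simps)
      moreover have "\<bar>real_of_int i / real m - y\<bar> \<le> d" using n nn by simp
      ultimately show ?thesis unfolding M2_def
        by (intro mod_win[OF cont per m, where k = "i - 1"]) (use im d in auto)
    qed
    show ?thesis unfolding P using a1 a2 by linarith
  next
    case False
    have a1: "\<bar>u0 (real_of_int (i+1) / real m) - u0 (y + d)\<bar> \<le> M1"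
    proof -
      have "(y + d) * real m \<le> real_of_int i + 1" using i1 by simp
      moreover have "\<bar>real_of_int (i+1) / real m - (y + d)\<bar> \<le> 1 / real m"
      proof -
        have "real_of_int i / real m \<le> y + d" "y + d < real_of_int (i+1) / real m"
          using i1 rm by (simp_all add: field_simps)
        moreover have "real_of_int (i+1) / real m = real_of_int i / real m + 1 / real m"
          by (simp add: add_divide_distrib)
        ultimately show ?thesis by simp
      qed
      ultimately show ?thesis unfolding M1_def
        by (intro mod_win[OF cont per m, where k = i]) (use im i1 hpos in auto)
    qed
    have a2: "\<bar>u0 y - u0 (y + d)\<bar> \<le> M2"
      unfolding M2_def by (rule mod_W[OF cont per]) (use False d in auto)
    show ?thesis unfolding P using a1 a2 by linarith
  qed
  have "\<bar>lin_interp m u0 (y + d) - u0 y\<bar> = \<bar>(1 - lam) * (PP m u0 i - u0 y) + lam * (PP m u0 (i+1) - u0 y)\<bar>"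
    unfolding Lv by (simp add: algebra_simps)
  also have "\<dots> \<le> (1 - lam) * \<bar>PP m u0 i - u0 y\<bar> + lam * \<bar>PP m u0 (i+1) - u0 y\<bar>"
    using lam by (simp add: abs_mult order_trans[OF abs_triangle_ineq])
  also have "\<dots> \<le> (1 - lam) * (M1 + M2) + lam * (M1 + M2)"
  proof (cases "lam = 0")
    case True
    then show ?thesis using B1 M2 by simp
  next
    case False
    then have "lam > 0" using lam by simp
    then show ?thesis using B1 B2 M2 lam
      by (intro add_mono mult_left_mono) auto
  qed
  also have "\<dots> = M1 + M2" by (simp add: algebra_simps)
  finally show ?thesis unfolding M1_def M2_def .
qed



lemma mod_small:
  fixes u0 :: "real \<Rightarrow> real"
  assumes cont: "continuous_on {0..1} u0" and e: "e > 0"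
  shows "\<exists>dd>0. \<forall>r. 0 < r \<longrightarrow> r \<le> dd \<longrightarrow> modulus u0 r \<le> e"
proof -
  have "uniformly_continuous_on {0..1} u0" by (rule compact_uniformly_continuous[OF cont]) simp
  then obtain dd where dd: "dd > 0" "\<forall>x\<in>{0..1}. \<forall>x'\<in>{0..1}. dist x' x < dd \<longrightarrow> dist (u0 x') (u0 x) < e"
    unfolding uniformly_continuous_on_def using e by blast
  show ?thesis
  proof (intro exI[of _ dd] conjI allI impI dd(1))
    fix r :: real assume r: "0 < r" "r \<le> dd"
    show "modulus u0 r \<le> e" unfolding modulus_def
    proof (rule cSup_least)
      show "{\<bar>u0 x - u0 y\<bar> | x y. x \<in> {0..1} \<and> y \<in> {0..1} \<and> \<bar>x - y\<bar> < r} \<noteq> {}"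
        using r by (auto intro!: exI[of _ 0])
    next
      fix z assume "z \<in> {\<bar>u0 x - u0 y\<bar> | x y. x \<in> {0..1} \<and> y \<in> {0..1} \<and> \<bar>x - y\<bar> < r}"
      then obtain x y where z: "z = \<bar>u0 x - u0 y\<bar>" "x \<in> {0..1}" "y \<in> {0..1}" "\<bar>x - y\<bar> < r" by blast
      then have "dist (u0 x) (u0 y) < e" using dd(2) r by (auto simp: dist_real_def)
      then show "z \<le> e" using z by (simp add: dist_real_def)
    qed
  qed
qed

lemma u0_frac:
  assumes per: "\<forall>x. u0 (x+1) = u0 (x::real)"
  shows "u0 (frac t) = u0 t"
  using per_int[OF per, of "frac t" "\<lfloor>t\<rfloor>"] unfolding frac_def by simp

theorem mainTheorem4:
  fixes a :: real and p q :: nat and u0 :: "real \<Rightarrow> real" and \<delta> :: "nat \<Rightarrow> real"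
  defines "\<mu> \<equiv> real p / real q"
  defines "S \<equiv> {m::nat. 0 < m \<and> (\<exists>N::nat. real N = 1 / (\<mu> * (1 / real m)))}"
  assumes "a > 0" and "coprime p q" and "0 < \<mu>" and "\<mu> < 1"
    and "continuous_on {0..1} u0" and "\<forall>x. u0 (x + 1) = u0 x"
    and "\<forall>m\<in>S. 0 < \<delta> m \<and> \<delta> m < (1 / real m) / real q"
  shows "(\<forall>m\<in>S.
           (\<forall>x. jet_interp m (jet_init m u0 (\<delta> m)) x = lin_interp m u0 (x + \<delta> m)) \<and>
           (\<forall>n x. jet_interp m (jet_iter m \<mu> (jet_init m u0 (\<delta> m)) n) x
                 = jet_interp m (jet_init m u0 (\<delta> m)) (frac (x - real n * \<mu> * (1 / real m)))) \<and>
           (\<forall>n. jet_err_fun a m \<mu> u0 (\<delta> m) n integrable_on {0..1}) \<and>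
           (\<forall>n. jet_error a m \<mu> u0 (\<delta> m) n \<le> modulus u0 (1 / real m) + modulus u0 (\<delta> m)))
       \<and> ((\<lambda>m. limsup (\<lambda>n. ereal (jet_error a m \<mu> u0 (\<delta> m) n))) \<longlongrightarrow> ereal 0)
           (inf sequentially (principal S))
       \<and> (\<forall>n. ((\<lambda>m. jet_error a m \<mu> u0 (\<delta> m) n) \<longlongrightarrow> 0) (inf sequentially (principal S)))
       \<and> limsup (\<lambda>n. ereal (Lim (inf sequentially (principal S)) (\<lambda>m. jet_error a m \<mu> u0 (\<delta> m) n))) = 0"
proof -
  have apos: "a > 0" by fact
  have cont: "continuous_on {0..1} u0" by fact
  have per: "\<forall>x. u0 (x + 1) = u0 x" by fact
  have dS: "\<forall>m\<in>S. 0 < \<delta> m \<and> \<delta> m < (1 / real m) / real q" by fact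
  have mupos: "0 < \<mu>" by fact
  have q: "q > 0" using mupos unfolding \<mu>_def by (cases "q = 0") auto
  have p: "p > 0" using mupos unfolding \<mu>_def by (cases "p = 0") auto
  have Sm: "0 < m \<and> 0 < \<delta> m \<and> \<delta> m < 1 / real m" if "m \<in> S" for m
  proof -
    have m: "0 < m" using that unfolding S_def by simp
    have "1 / (real m * real q) \<le> 1 / real m"
      by (rule frac_le) (use q m in auto)
    then have "(1 / real m) / real q \<le> 1 / real m" by simp
    then show ?thesis using dS that m by force
  qed
  define B where "B = (\<lambda>m. modulus u0 (1 / real m) + modulus u0 (\<delta> m))"
  define E where "E = (\<lambda>m n. jet_error a m \<mu> u0 (\<delta> m) n)"
  have errf: "jet_err_fun a m \<mu> u0 (\<delta> m) n = (\<lambda>x. \<bar>lin_interp m u0 ((x - real n * \<mu> / real m) + \<delta> m) - u0 (x - real n * \<mu> / real m)\<bar>)"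
    if mS: "m \<in> S" for m n
  proof
    fix x
    have m: "0 < m" and d: "0 < \<delta> m" "\<delta> m < 1 / real m" using Sm[OF mS] by auto
    have e1: "a * (real n * (\<mu> * (1 / real m) / a)) = real n * \<mu> / real m" using apos by simp
    have e2: "x + (\<delta> m - real n * \<mu> / real m) = (x - real n * \<mu> / real m) + \<delta> m" by simp
    show "jet_err_fun a m \<mu> u0 (\<delta> m) n x = \<bar>lin_interp m u0 ((x - real n * \<mu> / real m) + \<delta> m) - u0 (x - real n * \<mu> / real m)\<bar>"
      unfolding jet_err_fun_def iter_eq[OF per m d] e1 e2 u0_frac[OF per] ..
  qed
  have contf: "continuous_on {0..1} (jet_err_fun a m \<mu> u0 (\<delta> m) n)" if mS: "m \<in> S" for m n
  proof -
    have m: "0 < m" using Sm[OF mS] by auto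
    have Lc: "continuous_on UNIV (lin_interp m u0)"
      by (intro continuous_at_imp_continuous_on ballI L_cont[OF per m])
    have Uc: "continuous_on UNIV u0"
      by (intro continuous_at_imp_continuous_on ballI u0_cont[OF per cont])
    have c1: "continuous_on {0..1} (\<lambda>x. lin_interp m u0 ((x - real n * \<mu> / real m) + \<delta> m))"
      by (rule continuous_on_compose2[OF Lc]) (auto intro!: continuous_intros)
    have c2: "continuous_on {0..1} (\<lambda>x. u0 (x - real n * \<mu> / real m))"
      by (rule continuous_on_compose2[OF Uc]) (auto intro!: continuous_intros)
    show ?thesis unfolding errf[OF mS] by (intro continuous_intros c1 c2)
  qed
  have intf: "jet_err_fun a m \<mu> u0 (\<delta> m) n integrable_on {0..1}" if mS: "m \<in> S" for m n
    by (rule integrable_continuous_real[OF contf[OF mS]])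
  have Ebound: "0 \<le> E m n \<and> E m n \<le> B m" if mS: "m \<in> S" for m n
  proof -
    have m: "0 < m" and d: "0 < \<delta> m" "\<delta> m < 1 / real m" using Sm[OF mS] by auto
    have pw: "jet_err_fun a m \<mu> u0 (\<delta> m) n x \<le> B m" for x
      unfolding errf[OF mS] B_def by (rule pw_bound[OF cont per m d])
    have ci: "(\<lambda>x. B m) integrable_on {0..1::real}"
      by (rule integrable_continuous_real) (rule continuous_on_const)
    have "E m n \<le> integral {0..1} (\<lambda>x::real. B m)"
      unfolding E_def jet_error_def
      apply (rule Henstock_Kurzweil_Integration.integral_le)
        apply (rule intf[OF mS])
       apply (rule ci)
      using pw by auto
    also have "\<dots> = B m" by simp
    finally have "E m n \<le> B m" .
    moreover have "0 \<le> E m n"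
      unfolding E_def jet_error_def
      by (rule Henstock_Kurzweil_Integration.integral_nonneg[OF intf[OF mS]]) (simp add: jet_err_fun_def)
    ultimately show ?thesis by simp
  qed
  define F where "F = inf sequentially (principal S)"
  have pkS: "p * k \<in> S" if "k > 0" for k
  proof -
    have "real (q * k) = 1 / (\<mu> * (1 / real (p * k)))"
      unfolding \<mu>_def using p q that by (simp add: field_simps)
    moreover have "0 < p * k" using p that by simp
    ultimately show ?thesis unfolding S_def by blast
  qed
  have Fnb: "F \<noteq> bot"
  proof
    assume "F = bot"
    then have "eventually (\<lambda>m. False) F" by simp
    then have "eventually (\<lambda>m. m \<in> S \<longrightarrow> False) sequentially" unfolding F_def eventually_inf_principal .
    then obtain N where N: "\<forall>m\<ge>N. m \<notin> S" unfolding eventually_sequentially by blast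
    have "1 * (N + 1) \<le> p * (N + 1)" using p by (intro mult_le_mono1) simp
    then have "p * (N + 1) \<ge> N" by simp
    then show False using N pkS[of "N+1"] by auto
  qed
  have evS: "eventually (\<lambda>m. m \<in> S) F" unfolding F_def eventually_inf_principal by simp
  have Blim: "(B \<longlongrightarrow> 0) F"
  proof (rule tendstoI)
    fix e :: real assume e: "e > 0"
    obtain dd where dd: "dd > 0" "\<forall>r. 0 < r \<longrightarrow> r \<le> dd \<longrightarrow> modulus u0 r \<le> e / 3"
      using mod_small[OF cont, of "e/3"] e by auto
    obtain N :: nat where N: "N > 0" "inverse (real N) < dd" using ex_inverse_of_nat_less[OF dd(1)] by blast
    have "eventually (\<lambda>m. m \<ge> N) F" unfolding F_def eventually_inf_principal eventually_sequentially by auto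
    then show "eventually (\<lambda>m. dist (B m) 0 < e) F" using evS
    proof eventually_elim
      case (elim m)
      have m: "0 < m" and d: "0 < \<delta> m" "\<delta> m < 1 / real m" using Sm[OF elim(2)] by auto
      have "1 / real m \<le> 1 / real N" using elim(1) N(1) by (simp add: frac_le)
      then have hm: "1 / real m \<le> dd" using N(2) by (simp add: inverse_eq_divide)
      have b1: "modulus u0 (1 / real m) \<le> e / 3" using dd(2) hm m by simp
      have b2: "modulus u0 (\<delta> m) \<le> e / 3" using dd(2) hm d by simp
      have n1: "0 \<le> modulus u0 (1 / real m)" using mod_nonneg[OF cont] m by simp
      have n2: "0 \<le> modulus u0 (\<delta> m)" using mod_nonneg[OF cont d(1)] .
      show ?case unfolding B_def dist_real_def using b1 b2 n1 n2 e by simp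
    qed
  qed
  have Elim: "((\<lambda>m. E m n) \<longlongrightarrow> 0) F" for n
  proof (rule tendsto_sandwich[OF _ _ tendsto_const Blim])
    show "eventually (\<lambda>m. 0 \<le> E m n) F" using evS by eventually_elim (use Ebound in blast)
    show "eventually (\<lambda>m. E m n \<le> B m) F" using evS by eventually_elim (use Ebound in blast)
  qed
  have LSlim: "((\<lambda>m. limsup (\<lambda>n. ereal (E m n))) \<longlongrightarrow> ereal 0) F"
  proof (rule tendsto_sandwich[OF _ _ tendsto_const tendsto_ereal[OF Blim]])
    show "eventually (\<lambda>m. ereal 0 \<le> limsup (\<lambda>n. ereal (E m n))) F" using evS
    proof eventually_elim
      case (elim m)
      show ?case by (rule le_Limsup) (use Ebound[OF elim] in auto)
    qed
    show "eventually (\<lambda>m. limsup (\<lambda>n. ereal (E m n)) \<le> ereal (B m)) F" using evS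
    proof eventually_elim
      case (elim m)
      show ?case by (rule Limsup_bounded) (use Ebound[OF elim] in auto)
    qed
  qed
  have Lim0: "Lim F (\<lambda>m. E m n) = 0" for n
    by (rule tendsto_Lim[OF _ Elim]) (use Fnb in simp)
  have last: "limsup (\<lambda>n. ereal (Lim F (\<lambda>m. E m n))) = 0"
    unfolding Lim0 using Limsup_const[of sequentially "ereal 0"] by (simp add: zero_ereal_def)
  have first: "\<forall>m\<in>S.
           (\<forall>x. jet_interp m (jet_init m u0 (\<delta> m)) x = lin_interp m u0 (x + \<delta> m)) \<and>
           (\<forall>n x. jet_interp m (jet_iter m \<mu> (jet_init m u0 (\<delta> m)) n) x
                 = jet_interp m (jet_init m u0 (\<delta> m)) (frac (x - real n * \<mu> * (1 / real m)))) \<and>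
           (\<forall>n. jet_err_fun a m \<mu> u0 (\<delta> m) n integrable_on {0..1}) \<and>
           (\<forall>n. jet_error a m \<mu> u0 (\<delta> m) n \<le> modulus u0 (1 / real m) + modulus u0 (\<delta> m))"
  proof
    fix m assume mS: "m \<in> S"
    have m: "0 < m" and d: "0 < \<delta> m" "\<delta> m < 1 / real m" using Sm[OF mS] by auto
    have c2: "jet_interp m (jet_iter m \<mu> (jet_init m u0 (\<delta> m)) n) x
                 = jet_interp m (jet_init m u0 (\<delta> m)) (frac (x - real n * \<mu> * (1 / real m)))" for n x
    proof -
      have "x + (\<delta> m - real n * \<mu> / real m) = (x - real n * \<mu> * (1 / real m)) + \<delta> m" by simp
      show ?thesis unfolding iter_eq[OF per m d] claim1[OF per m d] L_frac
        by (rule arg_cong[where f="lin_interp m u0"]) simp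
    qed
    show "(\<forall>x. jet_interp m (jet_init m u0 (\<delta> m)) x = lin_interp m u0 (x + \<delta> m)) \<and>
           (\<forall>n x. jet_interp m (jet_iter m \<mu> (jet_init m u0 (\<delta> m)) n) x
                 = jet_interp m (jet_init m u0 (\<delta> m)) (frac (x - real n * \<mu> * (1 / real m)))) \<and>
           (\<forall>n. jet_err_fun a m \<mu> u0 (\<delta> m) n integrable_on {0..1}) \<and>
           (\<forall>n. jet_error a m \<mu> u0 (\<delta> m) n \<le> modulus u0 (1 / real m) + modulus u0 (\<delta> m))"
      using claim1[OF per m d] c2 intf[OF mS] Ebound[OF mS] unfolding E_def B_def by blast
  qed
  show ?thesis using first LSlim Elim last unfolding E_def F_def by blast
qed


end
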